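(* Let $\mathbb{F}$ be an algebraically closed field with $\mathrm{Char}(\mathbb{F})\ne2$, and let $s,t,z\in\mathbb{F}$ be nonzero with $s^2\neq1$, $t^2\ne1$, $s+t\neq0$, $z\neq1$. Put $\tilde y_1=tz+\frac{1-t^2}{s+t}$ and $\tilde y_2=-sz+\frac{1+st}{s+t}$. Then the pair $A=\begin{pmatrix}0&z&0\\1&0&1-z\\0&1&0\end{pmatrix}$, $A^*=\begin{pmatrix}0&\tilde y_1&0\\ s&0&\tilde y_2\\0&t&0\end{pmatrix}$ is a Leonard pair in $\mathrm{Mat}_3(\mathbb{F})$, and it has a parameter array with $\theta_0=1,\theta_1=0,\theta_2=-1$, $\theta^*_0=1,\theta^*_1=0,\theta^*_2=-1$, $\varphi_1=\varphi_2=\frac{(s-1)(t-1)}{s+t}$, $\phi_1=\phi_2=\frac{(s+1)(t+1)}{s+t}$.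
   Context: A Leonard pair in $\mathrm{Mat}_{d+1}(\mathbb{F})$ is a pair of matrices $A,A^*$ such that there is a basis of $\mathbb{F}^{d+1}$ in which $A$ is irreducible tridiagonal (tridiagonal with all sub/superdiagonal entries nonzero) and $A^*$ diagonal, and a basis in which $A^*$ is irreducible tridiagonal and $A$ diagonal. A Leonard system is $(A,\{E_i\}_{i=0}^d,A^*,\{E^*_i\}_{i=0}^d)$ where $A,A^*$ each have $d+1$ distinct eigenvalues, $\{E_i\},\{E^*_i\}$ are orderings of their primitive idempotents, and $E_iA^*E_j,E^*_iAE^*_j$ are $0$ for $|i-j|>1$ and nonzero for $|i-j|=1$. Eigenvalue sequences: $AE_i=\theta_iE_i$, $A^*E^*_i=\theta^*_iE^*_i$. First split sequence: for nonzero $v\in E^*_0V$, $u_i=(A-\theta_{i-1}I)\cdots(A-\theta_0I)v$ form a basis in which $A^*$ is upper bidiagonal with diagonal $\theta^*_0,\dots,\theta^*_d$ and superdiagonal $\varphi_1,\dots,\varphi_d$. Second split sequence $\{\phi_i\}$: first split sequence of $(A,\{E_{d-i}\},A^*,\{E^*_i\})$. Parameter array $(\{\theta_i\},\{\theta^*_i\},\{\varphi_i\},\{\phi_i\})$; a parameter array of a Leonard pair is that of any associated Leonard system. *)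

theory Defs
  imports "Jordan_Normal_Form.Determinant" "HOL-Computational_Algebra.Polynomial"
begin

definition irred_tridiag :: "nat \<Rightarrow> 'a::field mat \<Rightarrow> bool" where
  "irred_tridiag n B \<longleftrightarrow> B \<in> carrier_mat n n \<and>
     (\<forall>i<n. \<forall>j<n. (i + 1 < j \<or> j + 1 < i) \<longrightarrow> B $$ (i,j) = 0) \<and>
     (\<forall>i. i + 1 < n \<longrightarrow> B $$ (i+1,i) \<noteq> 0 \<and> B $$ (i,i+1) \<noteq> 0)"

definition diag_matrix :: "nat \<Rightarrow> 'a::field mat \<Rightarrow> bool" where
  "diag_matrix n B \<longleftrightarrow> B \<in> carrier_mat n n \<and> (\<forall>i<n. \<forall>j<n. i \<noteq> j \<longrightarrow> B $$ (i,j) = 0)"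

(* The matrix of a linear map X w.r.t. the basis given by the columns of an invertible P
   is P^{-1} X P; we write this as X * P = P * B. *)
definition leonard_pair :: "nat \<Rightarrow> 'a::field mat \<Rightarrow> 'a mat \<Rightarrow> bool" where
  "leonard_pair d A As \<longleftrightarrow> A \<in> carrier_mat (d+1) (d+1) \<and> As \<in> carrier_mat (d+1) (d+1) \<and>
     (\<exists>P B Bs. P \<in> carrier_mat (d+1) (d+1) \<and> det P \<noteq> 0 \<and>
        A * P = P * B \<and> As * P = P * Bs \<and> irred_tridiag (d+1) B \<and> diag_matrix (d+1) Bs) \<and>
     (\<exists>P B Bs. P \<in> carrier_mat (d+1) (d+1) \<and> det P \<noteq> 0 \<and>
        A * P = P * B \<and> As * P = P * Bs \<and> diag_matrix (d+1) B \<and> irred_tridiag (d+1) Bs)"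

fun msum :: "nat \<Rightarrow> (nat \<Rightarrow> 'a::field mat) \<Rightarrow> nat \<Rightarrow> 'a mat" where
  "msum n E 0 = 0\<^sub>m n n"
| "msum n E (Suc k) = E k + msum n E k"

(* E 0..E d is an ordering of the primitive idempotents of A, with A E_i = th_i E_i,
   and A has d+1 distinct eigenvalues th 0..th d (spectral decomposition). *)
definition prim_idem_seq :: "nat \<Rightarrow> 'a::field mat \<Rightarrow> (nat \<Rightarrow> 'a mat) \<Rightarrow> (nat \<Rightarrow> 'a) \<Rightarrow> bool" where
  "prim_idem_seq d A E th \<longleftrightarrow> A \<in> carrier_mat (d+1) (d+1) \<and> inj_on th {..d} \<and>
     (\<forall>i\<le>d. E i \<in> carrier_mat (d+1) (d+1) \<and> E i \<noteq> 0\<^sub>m (d+1) (d+1) \<and> A * E i = th i \<cdot>\<^sub>m E i) \<and>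
     (\<forall>i\<le>d. \<forall>j\<le>d. E i * E j = (if i = j then E i else 0\<^sub>m (d+1) (d+1))) \<and>
     msum (d+1) E (d+1) = 1\<^sub>m (d+1)"

definition leonard_system ::
  "nat \<Rightarrow> 'a::field mat \<Rightarrow> (nat \<Rightarrow> 'a mat) \<Rightarrow> 'a mat \<Rightarrow> (nat \<Rightarrow> 'a mat)
     \<Rightarrow> (nat \<Rightarrow> 'a) \<Rightarrow> (nat \<Rightarrow> 'a) \<Rightarrow> bool" where
  "leonard_system d A E As Es th ths \<longleftrightarrow>
     prim_idem_seq d A E th \<and> prim_idem_seq d As Es ths \<and>
     (\<forall>i\<le>d. \<forall>j\<le>d. (i + 1 < j \<or> j + 1 < i) \<longrightarrow>
        E i * As * E j = 0\<^sub>m (d+1) (d+1) \<and> Es i * A * Es j = 0\<^sub>m (d+1) (d+1)) \<and>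
     (\<forall>i\<le>d. \<forall>j\<le>d. (i + 1 = j \<or> j + 1 = i) \<longrightarrow>
        E i * As * E j \<noteq> 0\<^sub>m (d+1) (d+1) \<and> Es i * A * Es j \<noteq> 0\<^sub>m (d+1) (d+1))"

fun split_vec :: "nat \<Rightarrow> 'a::field mat \<Rightarrow> (nat \<Rightarrow> 'a) \<Rightarrow> 'a vec \<Rightarrow> nat \<Rightarrow> 'a vec" where
  "split_vec n A th v 0 = v"
| "split_vec n A th v (Suc i) = (A - th i \<cdot>\<^sub>m 1\<^sub>m n) *\<^sub>v split_vec n A th v i"

definition upper_bidiag :: "nat \<Rightarrow> (nat \<Rightarrow> 'a::field) \<Rightarrow> (nat \<Rightarrow> 'a) \<Rightarrow> 'a mat" where
  "upper_bidiag n ths ph = mat n n (\<lambda>(i,j). if i = j then ths i else if j = i + 1 then ph j else 0)"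

(* ph 1..d is the first split sequence of the Leonard system (A,E,As,Es) with
   eigenvalue sequences th, ths: for every nonzero v in Es_0 V, the vectors u_0..u_d
   form a basis in which As is upper bidiagonal with diagonal ths and superdiagonal ph. *)
definition first_split_seq ::
  "nat \<Rightarrow> 'a::field mat \<Rightarrow> (nat \<Rightarrow> 'a mat) \<Rightarrow> 'a mat \<Rightarrow> (nat \<Rightarrow> 'a mat)
     \<Rightarrow> (nat \<Rightarrow> 'a) \<Rightarrow> (nat \<Rightarrow> 'a) \<Rightarrow> (nat \<Rightarrow> 'a) \<Rightarrow> bool" where
  "first_split_seq d A E As Es th ths ph \<longleftrightarrow>
     (\<forall>v. v \<in> carrier_vec (d+1) \<longrightarrow> v \<noteq> 0\<^sub>v (d+1) \<longrightarrow> Es 0 *\<^sub>v v = v \<longrightarrow>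
        (let U = mat (d+1) (d+1) (\<lambda>(r,i). split_vec (d+1) A th v i $ r) in
         det U \<noteq> 0 \<and> As * U = U * upper_bidiag (d+1) ths ph))"

definition parameter_array_LS ::
  "nat \<Rightarrow> 'a::field mat \<Rightarrow> (nat \<Rightarrow> 'a mat) \<Rightarrow> 'a mat \<Rightarrow> (nat \<Rightarrow> 'a mat)
     \<Rightarrow> (nat \<Rightarrow> 'a) \<Rightarrow> (nat \<Rightarrow> 'a) \<Rightarrow> (nat \<Rightarrow> 'a) \<Rightarrow> (nat \<Rightarrow> 'a) \<Rightarrow> bool" where
  "parameter_array_LS d A E As Es th ths ph phi \<longleftrightarrow>
     leonard_system d A E As Es th ths \<and>
     first_split_seq d A E As Es th ths ph \<and>
     first_split_seq d A (\<lambda>i. E (d - i)) As Es (\<lambda>i. th (d - i)) ths phi"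

definition parameter_array_LP ::
  "nat \<Rightarrow> 'a::field mat \<Rightarrow> 'a mat
     \<Rightarrow> (nat \<Rightarrow> 'a) \<Rightarrow> (nat \<Rightarrow> 'a) \<Rightarrow> (nat \<Rightarrow> 'a) \<Rightarrow> (nat \<Rightarrow> 'a) \<Rightarrow> bool" where
  "parameter_array_LP d A As th ths ph phi \<longleftrightarrow>
     (\<exists>E Es. parameter_array_LS d A E As Es th ths ph phi)"

end

theory Submission
  imports Defs
begin


abbreviation m3 :: "'a \<Rightarrow> 'a \<Rightarrow> 'a \<Rightarrow> 'a \<Rightarrow> 'a \<Rightarrow> 'a \<Rightarrow> 'a \<Rightarrow> 'a \<Rightarrow> 'a \<Rightarrow> 'a mat" where
  "m3 a b c d e f g h i \<equiv> mat_of_rows_list 3 [[a,b,c],[d,e,f],[g,h,i]]"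

lemma less3: "(i::nat) < 3 \<longleftrightarrow> i = 0 \<or> i = 1 \<or> i = 2" by auto

lemma m3_carrier[simp]: "m3 a b c d e f g h i \<in> carrier_mat 3 3"
  by (rule carrier_matI) (simp_all add: mat_of_rows_list_def)
lemma m3_dim[simp]: "dim_row (m3 a b c d e f g h i) = 3" "dim_col (m3 a b c d e f g h i) = 3"
  by (simp_all add: mat_of_rows_list_def)

lemma m3_gen: "k < 3 \<Longrightarrow> l < 3 \<Longrightarrow> m3 a b c d e f g h i $$ (k,l) = [[a,b,c],[d,e,f],[g,h,i]] ! k ! l"
  by (simp add: mat_of_rows_list_def)

lemma m3_idx[simp]:
  "m3 a b c d e f g h i $$ (0,0) = a" "m3 a b c d e f g h i $$ (0,1) = b" "m3 a b c d e f g h i $$ (0,2) = c"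
  "m3 a b c d e f g h i $$ (1,0) = d" "m3 a b c d e f g h i $$ (1,1) = e" "m3 a b c d e f g h i $$ (1,2) = f"
  "m3 a b c d e f g h i $$ (2,0) = g" "m3 a b c d e f g h i $$ (2,1) = h" "m3 a b c d e f g h i $$ (2,2) = i"
  by (simp_all add: m3_gen)

lemma m3_idx'[simp]:
  "m3 a b c d e f g h i $$ (0,Suc 0) = b"
  "m3 a b c d e f g h i $$ (Suc 0,0) = d" "m3 a b c d e f g h i $$ (Suc 0,Suc 0) = e" "m3 a b c d e f g h i $$ (Suc 0,2) = f"
  "m3 a b c d e f g h i $$ (2,Suc 0) = h"
  by (simp_all add: m3_gen)

lemma m3_eq: "(m3 a b c d e f g h i = m3 a' b' c' d' e' f' g' h' i') \<longleftrightarrow>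
  a = a' \<and> b = b' \<and> c = c' \<and> d = d' \<and> e = e' \<and> f = f' \<and> g = g' \<and> h = h' \<and> i = i'"
  (is "?l \<longleftrightarrow> ?r")
proof
  assume l: ?l
  have "[a,b,c,d,e,f,g,h,i] = [a',b',c',d',e',f',g',h',i']"
    using arg_cong[OF l, of "\<lambda>M. [M$$(0,0), M$$(0,1), M$$(0,2), M$$(1,0), M$$(1,1), M$$(1,2), M$$(2,0), M$$(2,1), M$$(2,2)]"]
    by (simp only: m3_idx)
  then show ?r by simp
next
  assume ?r then show ?l by simp
qed

lemma sum3: "(\<Sum>k=0..<3. f k) = f 0 + f 1 + f (2::nat)"
  by (simp add: numeral_3_eq_3 numeral_2_eq_2)

lemma sum3': "(\<Sum>k<3. f k) = f 0 + f 1 + f (2::nat)"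
  by (simp add: numeral_3_eq_3 numeral_2_eq_2)

lemma m3_ext: assumes "M \<in> carrier_mat 3 3"
  shows "M = m3 (M$$(0,0)) (M$$(0,1)) (M$$(0,2)) (M$$(1,0)) (M$$(1,1)) (M$$(1,2)) (M$$(2,0)) (M$$(2,1)) (M$$(2,2))"
  apply (rule eq_matI)
  using assms by (auto simp: less3 m3_gen)

lemma m3_mult: "m3 a b c d e f g h i * m3 a' b' c' d' e' f' g' h' i' =
  m3 (a*a'+b*d'+c*g') (a*b'+b*e'+c*h') (a*c'+b*f'+c*i')
     (d*a'+e*d'+f*g') (d*b'+e*e'+f*h') (d*c'+e*f'+f*i')
     (g*a'+h*d'+i*g') (g*b'+h*e'+i*h') (g*c'+h*f'+i*i')"
  by (rule eq_matI) (auto simp: less3 scalar_prod_def sum3 m3_gen)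

lemma m3_add: "m3 a b c d e f g h i + m3 a' b' c' d' e' f' g' h' i' =
  m3 (a+a') (b+b') (c+c') (d+d') (e+e') (f+f') (g+g') (h+h') (i+i')"
  by (rule eq_matI) (auto simp: less3 m3_gen)

lemma m3_minus: "m3 a b c d e f g h i - m3 a' b' c' d' e' f' g' h' i' =
  m3 (a-a') (b-b') (c-c') (d-d') (e-e') (f-f') (g-g') (h-h') (i-i')"
  by (rule eq_matI) (auto simp: less3 m3_gen)

lemma m3_smult: "x \<cdot>\<^sub>m m3 a b c d e f g h i = m3 (x*a) (x*b) (x*c) (x*d) (x*e) (x*f) (x*g) (x*h) (x*i)"
  by (rule eq_matI) (auto simp: less3 m3_gen)

lemma m3_one: "1\<^sub>m 3 = m3 1 0 0 0 1 0 0 0 1"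
  by (rule eq_matI) (auto simp: less3 m3_gen)

lemma m3_zero: "0\<^sub>m 3 3 = m3 0 0 0 0 0 0 0 0 0"
  by (rule eq_matI) (auto simp: less3 m3_gen)


lemma m3_mult_vec_idx:
  assumes "v \<in> carrier_vec 3"
  shows "(m3 a b c d e f g h i *\<^sub>v v) $ 0 = a * v$0 + b * v$1 + c * v$2"
    "(m3 a b c d e f g h i *\<^sub>v v) $ 1 = d * v$0 + e * v$1 + f * v$2"
    "(m3 a b c d e f g h i *\<^sub>v v) $ 2 = g * v$0 + h * v$1 + i * v$2"
  using assms by (auto simp: scalar_prod_def sum3 row_def)

lemma det1: assumes "M \<in> carrier_mat 1 1" shows "det M = M $$ (0,0)"
proof -
  have "det M = (\<Sum>k<1. M $$ (k,0) * cofactor M k 0)"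
    by (rule laplace_expansion_column[OF assms]) auto
  also have "\<dots> = M $$ (0,0)"
    using assms by (simp add: cofactor_def mat_delete_def)
  finally show ?thesis .
qed

lemma det1m: "det (mat (Suc 0) (Suc 0) f) = f (0,0)"
  by (subst det1) auto

lemma det2m: "det (mat 2 2 f) = f (0,0) * f (1,1) - f (1,0) * f (0,1)"
proof -
  have "det (mat 2 2 f) = (\<Sum>k<2. mat 2 2 f $$ (k,0) * cofactor (mat 2 2 f) k 0)"
    by (rule laplace_expansion_column) auto
  also have "\<dots> = f (0,0) * f (1,1) - f (1,0) * f (0,1)"
    by (simp add: cofactor_def numeral_2_eq_2 mat_delete_def det1m)
  finally show ?thesis .
qed

lemma m3_det: "det (m3 a b c d e f g h i) = a*(e*i - f*h) - d*(b*i - c*h) + g*(b*f-c*e)"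
proof -
  have "det (m3 a b c d e f g h i) = (\<Sum>k<3. m3 a b c d e f g h i $$ (k,0) * cofactor (m3 a b c d e f g h i) k 0)"
    by (rule laplace_expansion_column) auto
  also have "\<dots> = a*(e*i - f*h) - d*(b*i - c*h) + g*(b*f-c*e)"
    by (simp add: cofactor_def sum3' mat_delete_def det2m m3_gen) (simp add: algebra_simps)
  finally show ?thesis .
qed




lemma le2: "(i::nat) \<le> 2 \<longleftrightarrow> i = 0 \<or> i = 1 \<or> i = 2" by auto
lemma suc3: "(i::nat) + 1 < 3 \<longleftrightarrow> i = 0 \<or> i = 1" by auto
lemma all_less3: "(\<forall>i<(3::nat). P i) \<longleftrightarrow> P 0 \<and> P 1 \<and> P 2"
  unfolding less3 by blast
lemma all_le2: "(\<forall>i\<le>(2::nat). P i) \<longleftrightarrow> P 0 \<and> P 1 \<and> P 2"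
  unfolding le2 by blast
lemma all_suc3: "(\<forall>i. i + 1 < (3::nat) \<longrightarrow> P i) \<longleftrightarrow> P 0 \<and> P 1"
  unfolding suc3 by blast

lemma irred3: "irred_tridiag 3 (m3 a b c d e f g h i) \<longleftrightarrow> c = 0 \<and> g = 0 \<and> b \<noteq> 0 \<and> d \<noteq> 0 \<and> f \<noteq> 0 \<and> h \<noteq> 0"
  unfolding irred_tridiag_def all_less3 all_suc3 by (auto simp: m3_gen)

lemma diag3: "diag_matrix 3 (m3 a b c d e f g h i) \<longleftrightarrow> b = 0 \<and> c = 0 \<and> d = 0 \<and> f = 0 \<and> g = 0 \<and> h = 0"
  unfolding diag_matrix_def all_less3 by (auto simp: m3_gen)

lemma two_ne: assumes "CHAR('a::field) \<noteq> 2" shows "(2::'a) \<noteq> 0"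
proof
  assume "(2::'a) = 0"
  then have "of_nat 2 = (0::'a)" by simp
  then have dv: "CHAR('a) dvd 2" by (simp only: of_nat_eq_0_iff_char_dvd)
  have "CHAR('a) \<le> 2" using dv by (rule dvd_imp_le) simp
  moreover have "CHAR('a) \<noteq> 0" using dv by (intro notI) simp
  moreover have "CHAR('a) \<noteq> Suc 0" by (rule CHAR_not_1)
  ultimately show False using assms by linarith
qed

lemma LP1:
  fixes s t z :: "'a::alg_closed_field"
  assumes "CHAR('a) \<noteq> 2"
    and "s \<noteq> 0" "t \<noteq> 0" "z \<noteq> 0"
    and "s^2 \<noteq> 1" "t^2 \<noteq> 1" "s + t \<noteq> 0" "z \<noteq> 1"
  defines "y1 \<equiv> t * z + (1 - t^2) / (s + t)"
    and "y2 \<equiv> - s * z + (1 + s * t) / (s + t)"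
  defines "A \<equiv> mat_of_rows_list 3 [[0, z, 0], [1, 0, 1 - z], [0, 1, 0]]"
    and "As \<equiv> mat_of_rows_list 3 [[0, y1, 0], [s, 0, y2], [0, t, 0]]"
  shows "leonard_pair 2 A As"
proof -
  have two: "(2::'a) \<noteq> 0" using two_ne assms(1) .
  have four: "(4::'a) \<noteq> 0" using two by (metis mult_eq_0_iff numeral_Bit0_eq_double one_add_one mult_2)
  have D: "s + t \<noteq> 0" by fact
  have ss: "1 - s^2 \<noteq> 0" "s^2 - 1 \<noteq> 0" using assms(5) by auto
  have tt: "1 - t^2 \<noteq> 0" "t^2 - 1 \<noteq> 0" using assms(6) by auto
  have ss': "1 - s*s \<noteq> 0" "s*s - 1 \<noteq> 0" using ss by (auto simp: power2_eq_square)
  have tt': "1 - t*t \<noteq> 0" "t*t - 1 \<noteq> 0" using tt by (auto simp: power2_eq_square)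
  define D where "D = s + t"
  have D0: "D \<noteq> 0" using D unfolding D_def .
  have sD: "s = D - t" unfolding D_def by simp
  have y1D: "y1 = t * z + (1 - t^2) / D" unfolding y1_def D_def ..
  have y2D: "y2 = - (D - t) * z + (1 + (D - t) * t) / D" unfolding y2_def D_def by simp
  define P1 where "P1 = m3 y1 y2 y1 1 0 (-1) t (-s) t"
  define B1 where "B1 = m3 ((1+s*t)/D) ((1-s^2)/(2*D)) 0 ((t^2-1)/D) 0 ((1-t^2)/D)
     0 (-(1-s^2)/(2*D)) (-(1+s*t)/D)"
  define Bs1 where "Bs1 = m3 1 0 0 0 0 0 0 0 (-1::'a)"
  define P2 where "P2 = m3 z (1-z) z 1 0 (-1) 1 (-1) 1"
  define Bs2 where "Bs2 = m3 ((1+s*t)/D) ((s^2-1)/(2*D)) 0 ((1-t^2)/D) 0 ((t^2-1)/D)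
     0 ((1-s^2)/(2*D)) (-(1+s*t)/D)"
  have e1: "A * P1 = P1 * B1"
    unfolding A_def P1_def B1_def m3_mult m3_eq y1D y2D unfolding sD using D0 two four
    by (simp add: field_simps power2_eq_square)
  have e2: "As * P1 = P1 * Bs1"
    unfolding As_def P1_def Bs1_def m3_mult m3_eq y1D y2D unfolding sD using D0 two four
    by (simp add: field_simps power2_eq_square)
  have e3: "A * P2 = P2 * Bs1"
    unfolding A_def P2_def Bs1_def m3_mult m3_eq
    by (simp add: field_simps)
  have e4: "As * P2 = P2 * Bs2"
    unfolding As_def P2_def Bs2_def m3_mult m3_eq y1D y2D unfolding sD using D0 two four
    by (simp add: field_simps power2_eq_square)
  have d1: "det P1 = -2"
    unfolding P1_def m3_det y1D y2D unfolding sD using D0 two four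
    by (simp add: field_simps power2_eq_square)
  have d2: "det P2 = -2"
    unfolding P2_def m3_det by (simp add: field_simps)
  have i1: "irred_tridiag 3 B1"
    unfolding B1_def irred3 using D0 two four ss tt by simp
  have i2: "irred_tridiag 3 Bs2"
    unfolding Bs2_def irred3 using D0 two ss tt by simp
  have g1: "diag_matrix 3 Bs1" unfolding Bs1_def diag3 by simp
  show ?thesis
    unfolding leonard_pair_def
    apply (intro conjI)
       apply (simp add: A_def)
      apply (simp add: As_def)
     apply (rule exI[of _ P1], rule exI[of _ B1], rule exI[of _ Bs1])
     using e1 e2 d1 i1 g1 two apply (simp add: P1_def)
    apply (rule exI[of _ P2], rule exI[of _ Bs1], rule exI[of _ Bs2])
    using e3 e4 d2 i2 g1 two apply (simp add: P2_def)
    done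
qed
lemma nzI: "M $$ (k,l) \<noteq> 0 \<Longrightarrow> k < n \<Longrightarrow> l < m \<Longrightarrow> M \<noteq> 0\<^sub>m n m"
  by auto

lemma PA:
  fixes s t z :: "'a::alg_closed_field"
  assumes "CHAR('a) \<noteq> 2"
    and "s \<noteq> 0" "t \<noteq> 0" "z \<noteq> 0"
    and "s^2 \<noteq> 1" "t^2 \<noteq> 1" "s + t \<noteq> 0" "z \<noteq> 1"
  defines "y1 \<equiv> t * z + (1 - t^2) / (s + t)"
    and "y2 \<equiv> - s * z + (1 + s * t) / (s + t)"
  defines "A \<equiv> mat_of_rows_list 3 [[0, z, 0], [1, 0, 1 - z], [0, 1, 0]]"
    and "As \<equiv> mat_of_rows_list 3 [[0, y1, 0], [s, 0, y2], [0, t, 0]]"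
  shows "parameter_array_LP 2 A As
      (\<lambda>i. [1, 0, -1] ! i) (\<lambda>i. [1, 0, -1] ! i)
      (\<lambda>i. (s - 1) * (t - 1) / (s + t)) (\<lambda>i. (s + 1) * (t + 1) / (s + t))"
proof -
  have two: "(2::'a) \<noteq> 0" using two_ne assms(1) .
  have four: "(4::'a) \<noteq> 0" using two by (metis mult_eq_0_iff numeral_Bit0_eq_double one_add_one mult_2)
  have n8: "(8::'a) \<noteq> 0" using two four by (metis mult_eq_0_iff num_double numeral_times_numeral)
  have n16: "(16::'a) \<noteq> 0" using two n8 by (metis mult_eq_0_iff num_double numeral_times_numeral)
  have n32: "(32::'a) \<noteq> 0" using two n16 by (metis mult_eq_0_iff num_double numeral_times_numeral)
  have n64: "(64::'a) \<noteq> 0" using two n32 by (metis mult_eq_0_iff num_double numeral_times_numeral)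
  note nums = two four n8 n16 n32 n64
  have D: "s + t \<noteq> 0" by fact
  have ss: "1 - s^2 \<noteq> 0" "s^2 - 1 \<noteq> 0" using assms(5) by auto
  have tt: "1 - t^2 \<noteq> 0" "t^2 - 1 \<noteq> 0" using assms(6) by auto
  have z0: "z \<noteq> 0" "1 - z \<noteq> 0" using assms(4,8) by auto
  have st: "s \<noteq> 0" "t \<noteq> 0" by fact+
  define D where "D = s + t"
  have D0: "D \<noteq> 0" using D unfolding D_def .
  have sD: "s = D - t" unfolding D_def by simp
  have y1D: "y1 = t * z + (1 - t^2) / D" unfolding y1_def D_def ..
  have y2D: "y2 = - (D - t) * z + (1 + (D - t) * t) / D" unfolding y2_def D_def by simp
  define th where "th = (\<lambda>i::nat. [1, 0, -1::'a] ! i)"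
  define E0 where "E0 = m3 (z/2) (z/2) (z*(1-z)/2) (1/2) (1/2) ((1-z)/2) (1/2) (1/2) ((1-z)/2)"
  define E1 where "E1 = m3 (1-z) 0 (-(1-z)*z) 0 0 0 (-1) 0 z"
  define E2 where "E2 = m3 (z/2) (-z/2) (z*(1-z)/2) (-1/2) (1/2) (-(1-z)/2) (1/2) (-1/2) ((1-z)/2)"
  define F0 where "F0 = m3 (y1*s/2) (y1/2) (y1*y2/2) (s/2) (1/2) (y2/2) (t*s/2) (t/2) (t*y2/2)"
  define F1 where "F1 = m3 (y2*t) 0 (-y2*y1) 0 0 0 (-s*t) 0 (s*y1)"
  define F2 where "F2 = m3 (y1*s/2) (-y1/2) (y1*y2/2) (-s/2) (1/2) (-y2/2) (t*s/2) (-t/2) (t*y2/2)"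
  define E where "E = (\<lambda>i::nat. [E0, E1, E2] ! i)"
  define Es where "Es = (\<lambda>i::nat. [F0, F1, F2] ! i)"
  note defsA = A_def E0_def E1_def E2_def
  note defsF = As_def F0_def F1_def F2_def y1D y2D
  note ms = m3_mult m3_eq m3_smult m3_zero m3_add m3_one
  have a0: "A * E0 = 1 \<cdot>\<^sub>m E0" unfolding defsA ms using nums by (simp add: field_simps)
  have a1: "A * E1 = 0 \<cdot>\<^sub>m E1" unfolding defsA ms using nums by (simp add: field_simps)
  have a2: "A * E2 = (-1) \<cdot>\<^sub>m E2" unfolding defsA ms using nums by (simp add: field_simps)
  have f0: "As * F0 = 1 \<cdot>\<^sub>m F0" unfolding defsF ms unfolding sD using D0 nums
    by (simp add: field_simps power2_eq_square)
  have f1: "As * F1 = 0 \<cdot>\<^sub>m F1" unfolding defsF ms unfolding sD using D0 nums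
    by (simp add: field_simps power2_eq_square)
  have f2: "As * F2 = (-1) \<cdot>\<^sub>m F2" unfolding defsF ms unfolding sD using D0 nums
    by (simp add: field_simps power2_eq_square)
  have n0: "E0 \<noteq> 0\<^sub>m 3 3" by (rule nzI[of _ 1 0]) (simp_all add: E0_def two)
  have n1: "E1 \<noteq> 0\<^sub>m 3 3" by (rule nzI[of _ 2 0]) (simp_all add: E1_def)
  have n2: "E2 \<noteq> 0\<^sub>m 3 3" by (rule nzI[of _ 2 0]) (simp_all add: E2_def two)
  have m0: "F0 \<noteq> 0\<^sub>m 3 3" by (rule nzI[of _ 1 1]) (simp_all add: F0_def two)
  have m1: "F1 \<noteq> 0\<^sub>m 3 3" by (rule nzI[of _ 2 0]) (simp_all add: F1_def st)
  have m2: "F2 \<noteq> 0\<^sub>m 3 3" by (rule nzI[of _ 1 1]) (simp_all add: F2_def two)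
  have p00: "E0 * E0 = E0" unfolding defsA ms using nums by (simp add: field_simps)
  have p01: "E0 * E1 = 0\<^sub>m 3 3" unfolding defsA ms using nums by (simp add: field_simps)
  have p02: "E0 * E2 = 0\<^sub>m 3 3" unfolding defsA ms using nums by (simp add: field_simps)
  have p10: "E1 * E0 = 0\<^sub>m 3 3" unfolding defsA ms using nums by (simp add: field_simps)
  have p11: "E1 * E1 = E1" unfolding defsA ms using nums by (simp add: field_simps)
  have p12: "E1 * E2 = 0\<^sub>m 3 3" unfolding defsA ms using nums by (simp add: field_simps)
  have p20: "E2 * E0 = 0\<^sub>m 3 3" unfolding defsA ms using nums by (simp add: field_simps)
  have p21: "E2 * E1 = 0\<^sub>m 3 3" unfolding defsA ms using nums by (simp add: field_simps)
  have p22: "E2 * E2 = E2" unfolding defsA ms using nums by (simp add: field_simps)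
  have pE: "E2 + (E1 + (E0 + 0\<^sub>m 3 3)) = 1\<^sub>m 3" unfolding defsA ms using nums by (simp add: field_simps)
  have q00: "F0 * F0 = F0" unfolding defsF ms unfolding sD using D0 nums by (simp add: field_simps power2_eq_square)
  have q01: "F0 * F1 = 0\<^sub>m 3 3" unfolding defsF ms unfolding sD using D0 nums by (simp add: field_simps power2_eq_square)
  have q02: "F0 * F2 = 0\<^sub>m 3 3" unfolding defsF ms unfolding sD using D0 nums by (simp add: field_simps power2_eq_square)
  have q10: "F1 * F0 = 0\<^sub>m 3 3" unfolding defsF ms unfolding sD using D0 nums by (simp add: field_simps power2_eq_square)
  have q11: "F1 * F1 = F1" unfolding defsF ms unfolding sD using D0 nums by (simp add: field_simps power2_eq_square)
  have q12: "F1 * F2 = 0\<^sub>m 3 3" unfolding defsF ms unfolding sD using D0 nums by (simp add: field_simps power2_eq_square)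
  have q20: "F2 * F0 = 0\<^sub>m 3 3" unfolding defsF ms unfolding sD using D0 nums by (simp add: field_simps power2_eq_square)
  have q21: "F2 * F1 = 0\<^sub>m 3 3" unfolding defsF ms unfolding sD using D0 nums by (simp add: field_simps power2_eq_square)
  have q22: "F2 * F2 = F2" unfolding defsF ms unfolding sD using D0 nums by (simp add: field_simps power2_eq_square)
  have pF: "F2 + (F1 + (F0 + 0\<^sub>m 3 3)) = 1\<^sub>m 3" unfolding defsF ms unfolding sD using D0 nums
    by (simp add: field_simps power2_eq_square)
  have inj: "inj_on th {..2}"
    unfolding inj_on_def Ball_def atMost_iff all_le2 th_def using two
    by (simp add: eq_neg_iff_add_eq_0)
    have z1: "E0 * As * E2 = 0\<^sub>m 3 3" unfolding defsA defsF ms unfolding sD using D0 nums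
    by (simp add: field_simps power2_eq_square)
  have z2: "E2 * As * E0 = 0\<^sub>m 3 3" unfolding defsA defsF ms unfolding sD using D0 nums
    by (simp add: field_simps power2_eq_square)
  have z3: "F0 * A * F2 = 0\<^sub>m 3 3" unfolding defsA defsF ms unfolding sD using D0 nums
    by (simp add: field_simps power2_eq_square)
  have z4: "F2 * A * F0 = 0\<^sub>m 3 3" unfolding defsA defsF ms unfolding sD using D0 nums
    by (simp add: field_simps power2_eq_square)
  have c3: "E0 \<in> carrier_mat 3 3" "E1 \<in> carrier_mat 3 3" "E2 \<in> carrier_mat 3 3"
    "F0 \<in> carrier_mat 3 3" "F1 \<in> carrier_mat 3 3" "F2 \<in> carrier_mat 3 3"
    by (simp_all add: E0_def E1_def E2_def F0_def F1_def F2_def)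
  have "(E0 * As * E1) $$ (2,0) = (s^2-1)/(2*D)" unfolding defsA defsF ms m3_idx unfolding sD using D0 nums
    by (simp add: field_simps power2_eq_square)
  then have w1: "E0 * As * E1 \<noteq> 0\<^sub>m 3 3" using D0 ss two by (intro nzI[of _ 2 0]) auto
  have "(E1 * As * E0) $$ (2,0) = (t^2-1)/(2*D)" unfolding defsA defsF ms m3_idx unfolding sD using D0 nums
    by (simp add: field_simps power2_eq_square)
  then have w2: "E1 * As * E0 \<noteq> 0\<^sub>m 3 3" using D0 tt two by (intro nzI[of _ 2 0]) auto
  have "(E1 * As * E2) $$ (2,0) = (1-t^2)/(2*D)" unfolding defsA defsF ms m3_idx unfolding sD using D0 nums
    by (simp add: field_simps power2_eq_square)
  then have w3: "E1 * As * E2 \<noteq> 0\<^sub>m 3 3" using D0 tt two by (intro nzI[of _ 2 0]) auto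
  have "(E2 * As * E1) $$ (2,0) = (1-s^2)/(2*D)" unfolding defsA defsF ms m3_idx unfolding sD using D0 nums
    by (simp add: field_simps power2_eq_square)
  then have w4: "E2 * As * E1 \<noteq> 0\<^sub>m 3 3" using D0 ss two by (intro nzI[of _ 2 0]) auto
  have "(F0 * A * F1) $$ (2,0) = t^2*(1-s^2)/(2*D)" unfolding defsA defsF ms m3_idx unfolding sD using D0 nums
    by (simp add: field_simps power2_eq_square)
  then have w5: "F0 * A * F1 \<noteq> 0\<^sub>m 3 3" using D0 ss two st by (intro nzI[of _ 2 0]) auto
  have "(F1 * A * F0) $$ (2,0) = - (s^2)*(t^2-1)/(2*D)" unfolding defsA defsF ms m3_idx unfolding sD using D0 nums
    by (simp add: field_simps power2_eq_square)
  then have w6: "F1 * A * F0 \<noteq> 0\<^sub>m 3 3" using D0 tt two st by (intro nzI[of _ 2 0]) auto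
  have "(F1 * A * F2) $$ (2,0) = - (s^2)*(1-t^2)/(2*D)" unfolding defsA defsF ms m3_idx unfolding sD using D0 nums
    by (simp add: field_simps power2_eq_square)
  then have w7: "F1 * A * F2 \<noteq> 0\<^sub>m 3 3" using D0 tt two st by (intro nzI[of _ 2 0]) auto
  have "(F2 * A * F1) $$ (2,0) = - (t^2)*(1-s^2)/(2*D)" unfolding defsA defsF ms m3_idx unfolding sD using D0 nums
    by (simp add: field_simps power2_eq_square)
  then have w8: "F2 * A * F1 \<noteq> 0\<^sub>m 3 3" using D0 ss two st by (intro nzI[of _ 2 0]) auto
  have msum3: "\<And>n E. msum n E 3 = E 2 + (E 1 + (E 0 + 0\<^sub>m n n))"
    by (simp add: numeral_3_eq_3 numeral_2_eq_2)
  have PIA: "prim_idem_seq 2 A E th"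
    unfolding prim_idem_seq_def all_le2
    using c3 inj a0 a1 a2 n0 n1 n2 p00 p01 p02 p10 p11 p12 p20 p21 p22 pE
    by (simp add: E_def th_def A_def msum3)
  have PIF: "prim_idem_seq 2 As Es th"
    unfolding prim_idem_seq_def all_le2
    using c3 inj f0 f1 f2 m0 m1 m2 q00 q01 q02 q10 q11 q12 q20 q21 q22 pF
    by (simp add: Es_def th_def As_def msum3)
  have LS: "leonard_system 2 A E As Es th th"
    unfolding leonard_system_def all_le2
    using PIA PIF z1 z2 z3 z4 w1 w2 w3 w4 w5 w6 w7 w8
    by (simp add: E_def Es_def)
  have SP1: "first_split_seq 2 A E As Es th th (\<lambda>i. (s - 1) * (t - 1) / (s + t))"
    unfolding first_split_seq_def Let_def
  proof (intro allI impI)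
    fix v :: "'a vec"
    assume v: "v \<in> carrier_vec (2+1)" "v \<noteq> 0\<^sub>v (2+1)" "Es 0 *\<^sub>v v = v"
    have vc: "v \<in> carrier_vec 3" using v(1) by simp
    have ev: "F0 *\<^sub>v v = v" using v(3) by (simp add: Es_def)
    define c where "c = (s * v$0 + v$1 + y2 * v$2)/2"
    have e0: "(F0 *\<^sub>v v) $ 0 = v $ 0" "(F0 *\<^sub>v v) $ 1 = v $ 1" "(F0 *\<^sub>v v) $ 2 = v $ 2"
      using ev by simp_all
    have v0: "v$0 = y1*c" using e0(1) unfolding F0_def m3_mult_vec_idx[OF vc] c_def using two
      by (simp add: field_simps)
    have v1: "v$1 = c" using e0(2) unfolding F0_def m3_mult_vec_idx[OF vc] c_def using two
      by (simp add: field_simps)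
    have v2: "v$2 = t*c" using e0(3) unfolding F0_def m3_mult_vec_idx[OF vc] c_def using two
      by (simp add: field_simps)
    have c0: "c \<noteq> 0"
    proof
      assume "c = 0"
      then have "v = 0\<^sub>v 3" using vc v0 v1 v2 by (intro eq_vecI) (auto simp: less3)
      with v(2) show False by simp
    qed
    define u1 where "u1 = (A - th 0 \<cdot>\<^sub>m 1\<^sub>m 3) *\<^sub>v v"
    define u2 where "u2 = (A - th 1 \<cdot>\<^sub>m 1\<^sub>m 3) *\<^sub>v u1"
    have Am1: "A - th 0 \<cdot>\<^sub>m 1\<^sub>m 3 = m3 (-1) z 0 1 (-1) (1-z) 0 1 (-1)"
      unfolding A_def th_def m3_one m3_smult m3_minus by simp
    have Am0: "A - th 1 \<cdot>\<^sub>m 1\<^sub>m 3 = A"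
      unfolding A_def th_def m3_one m3_smult m3_minus by simp
    have u1c: "u1 \<in> carrier_vec 3" unfolding u1_def Am1 using vc by (rule mult_mat_vec_carrier[OF m3_carrier])
    have u1e: "u1$0 = -1 * v$0 + z*v$1" "u1$1 = v$0 - 1 * v$1 + (1-z)*v$2" "u1$2 = v$1 - 1 * v$2"
      unfolding u1_def Am1 m3_mult_vec_idx[OF vc] by simp_all
    have u2e: "u2$0 = z * u1$1" "u2$1 = u1$0 + (1-z)*u1$2" "u2$2 = u1$1"
      unfolding u2_def Am0 unfolding A_def m3_mult_vec_idx[OF u1c] by simp_all
    have U: "mat 3 3 (\<lambda>(r,i). split_vec 3 A th v i $ r) =
       m3 (v$0) (u1$0) (u2$0) (v$1) (u1$1) (u2$1) (v$2) (u1$2) (u2$2)"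
      by (rule eq_matI) (auto simp: less3 m3_gen u1_def u2_def numeral_2_eq_2)
    have UB: "upper_bidiag 3 th (\<lambda>i. (s - 1) * (t - 1) / (s + t)) =
        m3 1 ((s - 1) * (t - 1) / (s + t)) 0 0 0 ((s - 1) * (t - 1) / (s + t)) 0 0 (-1)"
      by (rule eq_matI) (auto simp: upper_bidiag_def less3 m3_gen th_def)
    have n3: "(2::nat) + 1 = 3" by simp
    have eq: "As * mat 3 3 (\<lambda>(r,i). split_vec 3 A th v i $ r) =
        mat 3 3 (\<lambda>(r,i). split_vec 3 A th v i $ r) * upper_bidiag 3 th (\<lambda>i. (s - 1) * (t - 1) / (s + t))"
      unfolding U UB unfolding u2e u1e v0 v1 v2 As_def ms y1D y2D D_def[symmetric] unfolding sD using D0 nums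
      by (simp add: field_simps power2_eq_square)
    have dt: "det (mat 3 3 (\<lambda>(r,i). split_vec 3 A th v i $ r)) =
        c^3 * (-(s^2-1)*(t^2-1)^2/D^3)"
      unfolding U unfolding u2e u1e v0 v1 v2 m3_det y1D y2D unfolding sD using D0 nums
      by (simp add: field_simps power2_eq_square power3_eq_cube)
    have "c^3 * (-(s^2-1)*(t^2-1)^2/D^3) \<noteq> 0" using c0 D0 ss tt by simp
    then show "det (mat (2+1) (2+1) (\<lambda>(r,i). split_vec (2+1) A th v i $ r)) \<noteq> 0 \<and>
      As * mat (2+1) (2+1) (\<lambda>(r,i). split_vec (2+1) A th v i $ r) =
        mat (2+1) (2+1) (\<lambda>(r,i). split_vec (2+1) A th v i $ r) * upper_bidiag (2+1) th (\<lambda>i. (s - 1) * (t - 1) / (s + t))"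
      unfolding n3 using eq dt by simp
  qed
  have SP2: "first_split_seq 2 A (\<lambda>i. E (2 - i)) As Es (\<lambda>i. th (2 - i)) th (\<lambda>i. (s + 1) * (t + 1) / (s + t))"
    unfolding first_split_seq_def Let_def
  proof (intro allI impI)
    fix v :: "'a vec"
    assume v: "v \<in> carrier_vec (2+1)" "v \<noteq> 0\<^sub>v (2+1)" "Es 0 *\<^sub>v v = v"
    have vc: "v \<in> carrier_vec 3" using v(1) by simp
    have ev: "F0 *\<^sub>v v = v" using v(3) by (simp add: Es_def)
    define c where "c = (s * v$0 + v$1 + y2 * v$2)/2"
    have e0: "(F0 *\<^sub>v v) $ 0 = v $ 0" "(F0 *\<^sub>v v) $ 1 = v $ 1" "(F0 *\<^sub>v v) $ 2 = v $ 2"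
      using ev by simp_all
    have v0: "v$0 = y1*c" using e0(1) unfolding F0_def m3_mult_vec_idx[OF vc] c_def using two
      by (simp add: field_simps)
    have v1: "v$1 = c" using e0(2) unfolding F0_def m3_mult_vec_idx[OF vc] c_def using two
      by (simp add: field_simps)
    have v2: "v$2 = t*c" using e0(3) unfolding F0_def m3_mult_vec_idx[OF vc] c_def using two
      by (simp add: field_simps)
    have c0: "c \<noteq> 0"
    proof
      assume "c = 0"
      then have "v = 0\<^sub>v 3" using vc v0 v1 v2 by (intro eq_vecI) (auto simp: less3)
      with v(2) show False by simp
    qed
    define u1 where "u1 = (A - (\<lambda>i. th (2 - i)) 0 \<cdot>\<^sub>m 1\<^sub>m 3) *\<^sub>v v"
    define u2 where "u2 = (A - (\<lambda>i. th (2 - i)) 1 \<cdot>\<^sub>m 1\<^sub>m 3) *\<^sub>v u1"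
    have Am1: "A - (\<lambda>i. th (2 - i)) 0 \<cdot>\<^sub>m 1\<^sub>m 3 = m3 (-(-1)) z 0 1 (-(-1)) (1-z) 0 1 (-(-1))"
      unfolding A_def th_def m3_one m3_smult m3_minus by simp
    have Am0: "A - (\<lambda>i. th (2 - i)) 1 \<cdot>\<^sub>m 1\<^sub>m 3 = A"
      unfolding A_def th_def m3_one m3_smult m3_minus by simp
    have u1c: "u1 \<in> carrier_vec 3" unfolding u1_def Am1 using vc by (rule mult_mat_vec_carrier[OF m3_carrier])
    have u1e: "u1$0 = -(-1) * v$0 + z*v$1" "u1$1 = v$0 - (-1) * v$1 + (1-z)*v$2" "u1$2 = v$1 - (-1) * v$2"
      unfolding u1_def Am1 m3_mult_vec_idx[OF vc] by simp_all
    have u2e: "u2$0 = z * u1$1" "u2$1 = u1$0 + (1-z)*u1$2" "u2$2 = u1$1"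
      unfolding u2_def Am0 unfolding A_def m3_mult_vec_idx[OF u1c] by simp_all
    have U: "mat 3 3 (\<lambda>(r,i). split_vec 3 A (\<lambda>i. th (2 - i)) v i $ r) =
       m3 (v$0) (u1$0) (u2$0) (v$1) (u1$1) (u2$1) (v$2) (u1$2) (u2$2)"
      by (rule eq_matI) (auto simp: less3 m3_gen u1_def u2_def numeral_2_eq_2)
    have UB: "upper_bidiag 3 th (\<lambda>i. (s + 1) * (t + 1) / (s + t)) =
        m3 1 ((s + 1) * (t + 1) / (s + t)) 0 0 0 ((s + 1) * (t + 1) / (s + t)) 0 0 (-1)"
      by (rule eq_matI) (auto simp: upper_bidiag_def less3 m3_gen th_def)
    have n3: "(2::nat) + 1 = 3" by simp
    have eq: "As * mat 3 3 (\<lambda>(r,i). split_vec 3 A (\<lambda>i. th (2 - i)) v i $ r) =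
        mat 3 3 (\<lambda>(r,i). split_vec 3 A (\<lambda>i. th (2 - i)) v i $ r) * upper_bidiag 3 th (\<lambda>i. (s + 1) * (t + 1) / (s + t))"
      unfolding U UB unfolding u2e u1e v0 v1 v2 As_def ms y1D y2D D_def[symmetric] unfolding sD using D0 nums
      by (simp add: field_simps power2_eq_square)
    have dt: "det (mat 3 3 (\<lambda>(r,i). split_vec 3 A (\<lambda>i. th (2 - i)) v i $ r)) =
        c^3 * (-(s^2-1)*(t^2-1)^2/D^3)"
      unfolding U unfolding u2e u1e v0 v1 v2 m3_det y1D y2D unfolding sD using D0 nums
      by (simp add: field_simps power2_eq_square power3_eq_cube)
    have "c^3 * (-(s^2-1)*(t^2-1)^2/D^3) \<noteq> 0" using c0 D0 ss tt by simp
    then show "det (mat (2+1) (2+1) (\<lambda>(r,i). split_vec (2+1) A (\<lambda>i. th (2 - i)) v i $ r)) \<noteq> 0 \<and>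
      As * mat (2+1) (2+1) (\<lambda>(r,i). split_vec (2+1) A (\<lambda>i. th (2 - i)) v i $ r) =
        mat (2+1) (2+1) (\<lambda>(r,i). split_vec (2+1) A (\<lambda>i. th (2 - i)) v i $ r) * upper_bidiag (2+1) th (\<lambda>i. (s + 1) * (t + 1) / (s + t))"
      unfolding n3 using eq dt by simp
  qed
  show ?thesis
    unfolding parameter_array_LP_def parameter_array_LS_def
    using LS SP1 SP2 unfolding th_def by blast
qed


theorem proposition4p5:
  fixes s t z :: "'a::alg_closed_field"
  assumes "CHAR('a) \<noteq> 2"
    and "s \<noteq> 0" "t \<noteq> 0" "z \<noteq> 0"
    and "s^2 \<noteq> 1" "t^2 \<noteq> 1" "s + t \<noteq> 0" "z \<noteq> 1"
  defines "y1 \<equiv> t * z + (1 - t^2) / (s + t)"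
    and "y2 \<equiv> - s * z + (1 + s * t) / (s + t)"
  defines "A \<equiv> mat_of_rows_list 3 [[0, z, 0], [1, 0, 1 - z], [0, 1, 0]]"
    and "As \<equiv> mat_of_rows_list 3 [[0, y1, 0], [s, 0, y2], [0, t, 0]]"
  shows "leonard_pair 2 A As \<and>
    parameter_array_LP 2 A As
      (\<lambda>i. [1, 0, -1] ! i) (\<lambda>i. [1, 0, -1] ! i)
      (\<lambda>i. (s - 1) * (t - 1) / (s + t)) (\<lambda>i. (s + 1) * (t + 1) / (s + t))"
  using LP1[OF assms(1-8)] PA[OF assms(1-8)] unfolding y1_def y2_def A_def As_def by blast


end
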